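(* Let $R$ be a commutative Bezout domain and $A,B\in M_n(R)$. Then there exists an invertible $2n\times 2n$ matrix $F$ over $R$ such that $$\begin{pmatrix} A & B\\ 0 & B\end{pmatrix}F=\begin{pmatrix} D & 0\\ * & M\end{pmatrix},$$ where $D$ is a left greatest common divisor of $A$ and $B$ and $M$ is a right least common multiple of $A$ and $B$ (here $*$ denotes some $n\times n$ matrix).
   Context: A commutative Bezout domain is a commutative integral domain with $1\ne0$ in which every finitely generated ideal is principal. For $A,B\in M_n(R)$: $D$ is a left common divisor of $A,B$ if $A=DA_1$, $B=DB_1$ for some $A_1,B_1\in M_n(R)$; $D$ is a left greatest common divisor if moreover every left common divisor $D'$ of $A,B$ is a left divisor of $D$ (i.e. $D=D'C$ for some $C$). $M$ is a right common multiple of $A,B$ if $M=AP=BQ$ for some $P,Q\in M_n(R)$; it is a right least common multiple if moreover $M$ is a left divisor of every right common multiple of $A$ and $B$. *)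

theory Defs
  imports "Jordan_Normal_Form.Matrix"
begin

text \<open>The ideal generated by a finite
  set S is the set of all R-linear combinations of elements of S.\<close>
definition bezout_domain :: "'a::idom itself \<Rightarrow> bool" where
  "bezout_domain TYPE('a) \<longleftrightarrow>
     (\<forall>S :: 'a set. finite S \<longrightarrow>
        (\<exists>d. {(\<Sum>s\<in>S. c s * s) | c. True} = {d * r | r. True}))"

definition left_divisor_mat :: "nat \<Rightarrow> 'a::comm_ring_1 mat \<Rightarrow> 'a mat \<Rightarrow> bool" where
  "left_divisor_mat n D A \<longleftrightarrow> (\<exists>C \<in> carrier_mat n n. A = D * C)"

definition left_common_divisor :: "nat \<Rightarrow> 'a::comm_ring_1 mat \<Rightarrow> 'a mat \<Rightarrow> 'a mat \<Rightarrow> bool" where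
  "left_common_divisor n A B D \<longleftrightarrow> D \<in> carrier_mat n n \<and>
     left_divisor_mat n D A \<and> left_divisor_mat n D B"

definition left_gcd :: "nat \<Rightarrow> 'a::comm_ring_1 mat \<Rightarrow> 'a mat \<Rightarrow> 'a mat \<Rightarrow> bool" where
  "left_gcd n A B D \<longleftrightarrow> left_common_divisor n A B D \<and>
     (\<forall>D' \<in> carrier_mat n n. left_common_divisor n A B D' \<longrightarrow> left_divisor_mat n D' D)"

definition right_common_multiple :: "nat \<Rightarrow> 'a::comm_ring_1 mat \<Rightarrow> 'a mat \<Rightarrow> 'a mat \<Rightarrow> bool" where
  "right_common_multiple n A B M \<longleftrightarrow> M \<in> carrier_mat n n \<and>
     (\<exists>P \<in> carrier_mat n n. \<exists>Q \<in> carrier_mat n n. M = A * P \<and> M = B * Q)"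

definition right_lcm :: "nat \<Rightarrow> 'a::comm_ring_1 mat \<Rightarrow> 'a mat \<Rightarrow> 'a mat \<Rightarrow> bool" where
  "right_lcm n A B M \<longleftrightarrow> right_common_multiple n A B M \<and>
     (\<forall>M' \<in> carrier_mat n n. right_common_multiple n A B M' \<longrightarrow> left_divisor_mat n M M')"

end

theory Submission
  imports Defs
begin

lemma mult_entry:
  assumes "A \<in> carrier_mat m k" "B \<in> carrier_mat k p" "i < m" "j < p"
  shows "(A*B)$$(i,j) = (\<Sum>l\<in>{0..<k}. A$$(i,l) * B$$(l,j))"
  using assms by (simp add: scalar_prod_def)

definition inv_ex :: "nat \<Rightarrow> 'a::comm_ring_1 mat \<Rightarrow> bool" where
  "inv_ex k F \<longleftrightarrow> F \<in> carrier_mat k k \<and> (\<exists>G\<in>carrier_mat k k. F*G = 1\<^sub>m k \<and> G*F = 1\<^sub>m k)"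

lemma inv_ex_invertible: "inv_ex k F \<Longrightarrow> invertible_mat F"
  unfolding inv_ex_def invertible_mat_def inverts_mat_def square_mat.simps
  by (metis carrier_matD(1) carrier_matD(2))

lemma inv_ex_mult: assumes "inv_ex k F" "inv_ex k H" shows "inv_ex k (F*H)"
proof -
  obtain F' where F: "F \<in> carrier_mat k k" "F' \<in> carrier_mat k k" "F*F' = 1\<^sub>m k" "F'*F = 1\<^sub>m k"
    using assms(1) unfolding inv_ex_def by blast
  obtain H' where H: "H \<in> carrier_mat k k" "H' \<in> carrier_mat k k" "H*H' = 1\<^sub>m k" "H'*H = 1\<^sub>m k"
    using assms(2) unfolding inv_ex_def by blast
  have "(F*H)*(H'*F') = F*(H*(H'*F'))" using F H by (meson assoc_mult_mat mult_carrier_mat)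
  also have "H*(H'*F') = (H*H')*F'" using F H by (meson assoc_mult_mat[symmetric])
  also have "F*((H*H')*F') = 1\<^sub>m k" using F H by simp
  finally have 1: "(F*H)*(H'*F') = 1\<^sub>m k" .
  have "(H'*F')*(F*H) = H'*(F'*(F*H))" using F H by (meson assoc_mult_mat mult_carrier_mat)
  also have "F'*(F*H) = (F'*F)*H" using F H by (meson assoc_mult_mat[symmetric])
  also have "H'*((F'*F)*H) = 1\<^sub>m k" using F H by simp
  finally have 2: "(H'*F')*(F*H) = 1\<^sub>m k" .
  show ?thesis unfolding inv_ex_def using F H 1 2 by (intro conjI bexI[of _ "H'*F'"]) auto
qed

lemma inv_ex_one: "inv_ex k (1\<^sub>m k)"
  unfolding inv_ex_def by (intro conjI bexI[of _ "1\<^sub>m k"]) auto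

lemma inv_ex_diag: assumes "inv_ex b W"
  shows "inv_ex (a+b) (four_block_mat (1\<^sub>m a) (0\<^sub>m a b) (0\<^sub>m b a) W)"
proof -
  obtain W' where W: "W \<in> carrier_mat b b" "W' \<in> carrier_mat b b" "W*W' = 1\<^sub>m b" "W'*W = 1\<^sub>m b"
    using assms unfolding inv_ex_def by blast
  let ?G = "four_block_mat (1\<^sub>m a) (0\<^sub>m a b) (0\<^sub>m b a) W'"
  have 1: "four_block_mat (1\<^sub>m a) (0\<^sub>m a b) (0\<^sub>m b a) W * ?G = 1\<^sub>m (a+b)"
    using W by (subst mult_four_block_mat[of _ a a _ b _ b _ _ a _ b]) auto
  have 2: "?G * four_block_mat (1\<^sub>m a) (0\<^sub>m a b) (0\<^sub>m b a) W = 1\<^sub>m (a+b)"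
    using W by (subst mult_four_block_mat[of _ a a _ b _ b _ _ a _ b]) auto
  show ?thesis unfolding inv_ex_def using W 1 2 by (intro conjI bexI[of _ ?G]) auto
qed

lemma four_block_inj:
  assumes "A1 \<in> carrier_mat r1 c1" "A2 \<in> carrier_mat r1 c2" "A3 \<in> carrier_mat r2 c1" "A4 \<in> carrier_mat r2 c2"
    "B1 \<in> carrier_mat r1 c1" "B2 \<in> carrier_mat r1 c2" "B3 \<in> carrier_mat r2 c1" "B4 \<in> carrier_mat r2 c2"
    and eq: "four_block_mat A1 A2 A3 A4 = four_block_mat B1 B2 B3 B4"
  shows "A1 = B1 \<and> A2 = B2 \<and> A3 = B3 \<and> A4 = B4"
proof -
  have e: "\<And>i j. i < r1 + r2 \<Longrightarrow> j < c1 + c2 \<Longrightarrow> (if i < r1 then if j < c1 then A1 $$ (i,j) else A2 $$ (i,j - c1)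
      else if j < c1 then A3 $$ (i - r1, j) else A4 $$ (i - r1, j - c1)) = (if i < r1 then if j < c1 then B1 $$ (i,j) else B2 $$ (i,j - c1)
      else if j < c1 then B3 $$ (i - r1, j) else B4 $$ (i - r1, j - c1))"
  proof -
    fix i j assume ij: "i < r1 + r2" "j < c1 + c2"
    have "four_block_mat A1 A2 A3 A4 $$ (i,j) = four_block_mat B1 B2 B3 B4 $$ (i,j)" using eq by simp
    thus "?thesis i j" using ij assms by (subst (asm) (1 2) index_mat_four_block) auto
  qed
  have 1: "A1 = B1"
  proof (rule eq_matI)
    fix i j assume "i < dim_row B1" "j < dim_col B1"
    thus "A1 $$ (i,j) = B1 $$ (i,j)" using e[of i j] assms by auto
  qed (use assms in auto)
  have 2: "A2 = B2"
  proof (rule eq_matI)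
    fix i j assume "i < dim_row B2" "j < dim_col B2"
    thus "A2 $$ (i,j) = B2 $$ (i,j)" using e[of i "j+c1"] assms by auto
  qed (use assms in auto)
  have 3: "A3 = B3"
  proof (rule eq_matI)
    fix i j assume "i < dim_row B3" "j < dim_col B3"
    thus "A3 $$ (i,j) = B3 $$ (i,j)" using e[of "i+r1" j] assms by auto
  qed (use assms in auto)
  have 4: "A4 = B4"
  proof (rule eq_matI)
    fix i j assume "i < dim_row B4" "j < dim_col B4"
    thus "A4 $$ (i,j) = B4 $$ (i,j)" using e[of "i+r1" "j+c1"] assms by auto
  qed (use assms in auto)
  show ?thesis using 1 2 3 4 by blast
qed

lemma bez2:
  assumes bz: "bezout_domain TYPE('a::idom)"
  shows "\<exists>u v x y. u*x + v*y = (1::'a) \<and> y*a = x*b"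
proof (cases "a = b")
  case True thus ?thesis by (intro exI[of _ 1] exI[of _ 0]) auto
next
  case False
  obtain d where d: "{(\<Sum>s\<in>{a,b}. c s * s) | c. True} = {d * r | r. True}"
    using bz unfolding bezout_domain_def by (meson finite.emptyI finite.insertI)
  have "d * 1 \<in> {d * r | r. True}" by blast
  hence "d \<in> {(\<Sum>s\<in>{a,b}. c s * s) | c. True}" using d by simp
  then obtain c where c: "(\<Sum>s\<in>{a,b}. c s * s) = d" by blast
  have sa: "(\<Sum>s\<in>{a,b}. (\<lambda>s. if s = a then 1 else 0) s * s) = a" using False by simp
  have "(\<Sum>s\<in>{a,b}. (\<lambda>s. if s = a then 1 else 0) s * s) \<in> {d * r | r. True}" 
    unfolding d[symmetric] mem_Collect_eq by (rule exI[of _ "\<lambda>s. if s = a then 1 else 0"]) simp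
  hence "a \<in> {d * r | r. True}" unfolding sa .
  then obtain x where x: "a = d * x" by blast
  have sb: "(\<Sum>s\<in>{a,b}. (\<lambda>s. if s = b then 1 else 0) s * s) = b" using False by simp
  have "(\<Sum>s\<in>{a,b}. (\<lambda>s. if s = b then 1 else 0) s * s) \<in> {d * r | r. True}" 
    unfolding d[symmetric] mem_Collect_eq by (rule exI[of _ "\<lambda>s. if s = b then 1 else 0"]) simp
  hence "b \<in> {d * r | r. True}" unfolding sb .
  then obtain y where y: "b = d * y" by blast
  have dnz: "d \<noteq> 0" using x y False by auto
  have "d = c a * a + c b * b" using c False by simp
  hence "d * 1 = d * (c a * x + c b * y)" using x y by (simp add: algebra_simps)
  hence "c a * x + c b * y = 1" using dnz by (metis mult_left_cancel)
  moreover have "y * a = x * b" using x y by simp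
  ultimately show ?thesis by blast
qed

lemma sum_one_point:
  assumes "p < k" "\<And>l. l < k \<Longrightarrow> l \<noteq> p \<Longrightarrow> f l = 0"
  shows "(\<Sum>l\<in>{0..<(k::nat)}. f l) = (f p :: 'a::comm_monoid_add)"
proof -
  have "(\<Sum>l\<in>{0..<k}. f l) = (\<Sum>l\<in>{p}. f l)"
    by (rule sum.mono_neutral_right) (use assms in auto)
  thus ?thesis by simp
qed

lemma sum_two_point:
  assumes "p < k" "q < k" "p \<noteq> q" "\<And>l. l < k \<Longrightarrow> l \<noteq> p \<Longrightarrow> l \<noteq> q \<Longrightarrow> f l = 0"
  shows "(\<Sum>l\<in>{0..<(k::nat)}. f l) = (f p + f q :: 'a::comm_monoid_add)"
proof -
  have "(\<Sum>l\<in>{0..<k}. f l) = (\<Sum>l\<in>{p,q}. f l)"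
    by (rule sum.mono_neutral_right) (use assms in auto)
  thus ?thesis using assms by simp
qed

definition emb :: "nat \<Rightarrow> nat \<Rightarrow> 'a::comm_ring_1 \<Rightarrow> 'a \<Rightarrow> 'a \<Rightarrow> 'a \<Rightarrow> 'a mat" where
  "emb k t a b c d = mat k k (\<lambda>(i,j). if i=0\<and>j=0 then a else if i=0\<and>j=t then b
     else if i=t\<and>j=0 then c else if i=t\<and>j=t then d else if i=j then 1 else 0)"

lemma emb_carrier[simp]: "emb k t a b c d \<in> carrier_mat k k"
  unfolding emb_def by simp

lemma emb_dim[simp]: "dim_row (emb k t a b c d) = k" "dim_col (emb k t a b c d) = k"
  unfolding emb_def by simp_all

lemma emb_index: "i < k \<Longrightarrow> j < k \<Longrightarrow> emb k t a b c d $$ (i,j) = (if i=0\<and>j=0 then a else if i=0\<and>j=t then b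
     else if i=t\<and>j=0 then c else if i=t\<and>j=t then d else if i=j then 1 else 0)"
  unfolding emb_def by simp

lemma mult_emb:
  assumes M: "M \<in> carrier_mat m k" and t: "0 < t" "t < k" and i: "i < m" and j: "j < k"
  shows "(M * emb k t a b c d) $$ (i,j) = (if j = 0 then M$$(i,0)*a + M$$(i,t)*c
     else if j = t then M$$(i,0)*b + M$$(i,t)*d else M$$(i,j))"
proof -
  have e: "(M * emb k t a b c d) $$ (i,j) = (\<Sum>l\<in>{0..<k}. M$$(i,l) * emb k t a b c d $$ (l,j))"
    by (rule mult_entry[OF M emb_carrier i j])
  show ?thesis
  proof (cases "j = 0 \<or> j = t")
    case True
    have "(\<Sum>l\<in>{0..<k}. M$$(i,l) * emb k t a b c d $$ (l,j)) =
      M$$(i,0) * emb k t a b c d $$ (0,j) + M$$(i,t) * emb k t a b c d $$ (t,j)"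
      by (rule sum_two_point) (use t j True in \<open>auto simp: emb_index\<close>)
    thus ?thesis using e True t j by (auto simp: emb_index)
  next
    case False
    have "(\<Sum>l\<in>{0..<k}. M$$(i,l) * emb k t a b c d $$ (l,j)) = M$$(i,j) * emb k t a b c d $$ (j,j)"
      by (rule sum_one_point) (use t j False in \<open>auto simp: emb_index\<close>)
    thus ?thesis using e False t j by (auto simp: emb_index)
  qed
qed

lemma emb_emb:
  assumes t: "0 < t" "t < k"
  shows "emb k t a b c d * emb k t a' b' c' d' = emb k t (a*a'+b*c') (a*b'+b*d') (c*a'+d*c') (c*b'+d*d')"
proof (rule eq_matI)
  fix i j assume "i < dim_row (emb k t (a*a'+b*c') (a*b'+b*d') (c*a'+d*c') (c*b'+d*d'))"
    "j < dim_col (emb k t (a*a'+b*c') (a*b'+b*d') (c*a'+d*c') (c*b'+d*d'))"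
  hence ij: "i < k" "j < k" unfolding emb_def by auto
  show "(emb k t a b c d * emb k t a' b' c' d') $$ (i,j) = emb k t (a*a'+b*c') (a*b'+b*d') (c*a'+d*c') (c*b'+d*d') $$ (i,j)"
    using ij t by (simp add: mult_emb[OF emb_carrier t ij] emb_index)
qed auto

lemma emb_one: "emb k t 1 0 0 1 = 1\<^sub>m k"
  by (rule eq_matI) (auto simp: emb_index)

lemma emb_inv:
  assumes t: "0 < t" "t < k" and uv: "u*x + v*y = 1"
  shows "inv_ex k (emb k t u (-y) v x)"
proof -
  have uv2: "x*u + y*v = 1" "v*y + u*x = 1" "y*v + x*u = 1" using uv by (simp_all add: algebra_simps)
  have "emb k t u (-y) v x * emb k t x y (-v) u = emb k t 1 0 0 1"
    unfolding emb_emb[OF t] using uv uv2 by (simp add: algebra_simps)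
  hence 1: "emb k t u (-y) v x * emb k t x y (-v) u = 1\<^sub>m k" by (simp add: emb_one)
  have "emb k t x y (-v) u * emb k t u (-y) v x = emb k t 1 0 0 1"
    unfolding emb_emb[OF t] using uv uv2 by (simp add: algebra_simps)
  hence 2: "emb k t x y (-v) u * emb k t u (-y) v x = 1\<^sub>m k" by (simp add: emb_one)
  show ?thesis unfolding inv_ex_def using 1 2 by (intro conjI bexI[of _ "emb k t x y (-v) u"]) auto
qed

lemma row_red_aux:
  assumes bz: "bezout_domain TYPE('a::idom)" and C: "(C::'a mat) \<in> carrier_mat m k" and m: "0 < m"
  shows "t \<le> k \<Longrightarrow> \<exists>V. inv_ex k V \<and> (\<forall>j. 0 < j \<and> j < t \<longrightarrow> (C*V)$$(0,j) = 0)"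
proof (induction t)
  case 0
  show ?case by (intro exI[of _ "1\<^sub>m k"]) (auto simp: inv_ex_one)
next
  case (Suc t)
  then obtain V where V: "inv_ex k V" and z: "\<forall>j. 0 < j \<and> j < t \<longrightarrow> (C*V)$$(0,j) = 0" by auto
  show ?case
  proof (cases "t = 0")
    case True thus ?thesis using V by auto
  next
    case False
    hence t: "0 < t" "t < k" using Suc by auto
    have Vc: "V \<in> carrier_mat k k" using V unfolding inv_ex_def by auto
    have CV: "C*V \<in> carrier_mat m k" using C Vc by auto
    obtain u v x y where uv: "u*x + v*y = 1" and yx: "y*((C*V)$$(0,0)) = x*((C*V)$$(0,t))"
      using bez2[OF bz] by blast
    let ?E = "emb k t u (-y) v x"
    have E: "inv_ex k ?E" by (rule emb_inv[OF t uv])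
    have eq: "C*(V*?E) = (C*V)*?E" using C Vc by (simp add: assoc_mult_mat[of _ m k _ k _ k])
    have "\<forall>j. 0 < j \<and> j < Suc t \<longrightarrow> (C*(V*?E))$$(0,j) = 0"
    proof (intro allI impI)
      fix j assume j: "0 < j \<and> j < Suc t"
      hence jk: "j < k" using t by auto
      show "(C*(V*?E))$$(0,j) = 0"
        unfolding eq mult_emb[OF CV t m jk] using j z yx by (auto simp: algebra_simps)
    qed
    thus ?thesis using inv_ex_mult[OF V E] by blast
  qed
qed

lemma row_red:
  assumes bz: "bezout_domain TYPE('a::idom)" and C: "(C::'a mat) \<in> carrier_mat m k" and m: "0 < m"
  shows "\<exists>V. inv_ex k V \<and> (\<forall>j. 0 < j \<and> j < k \<longrightarrow> (C*V)$$(0,j) = 0)"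
  using row_red_aux[OF bz C m, of k] by simp

lemma shift_row:
  assumes X: "X \<in> carrier_mat (Suc a) b" and Y: "Y \<in> carrier_mat b c" and i: "i < a" and j: "j < c"
  shows "(X*Y)$$(Suc i,j) = (mat a b (\<lambda>(i,j). X$$(Suc i,j)) * Y)$$(i,j)"
proof -
  have X': "mat a b (\<lambda>(i,j). X$$(Suc i,j)) \<in> carrier_mat a b" by simp
  show ?thesis using i j
    by (simp add: mult_entry[OF X Y _ j] mult_entry[OF X' Y i j])
qed

lemma first_col:
  assumes X: "X \<in> carrier_mat a (Suc b)" and Z: "Z \<in> carrier_mat (Suc b) p" and i: "i < a" and j: "j < p"
  shows "(X*Z)$$(i,j) = X$$(i,0)*Z$$(0,j) + (mat a b (\<lambda>(i,j). X$$(i,Suc j)) * mat b p (\<lambda>(i,j). Z$$(Suc i,j)))$$(i,j)"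
proof -
  have X': "mat a b (\<lambda>(i,j). X$$(i,Suc j)) \<in> carrier_mat a b" by simp
  have Z': "mat b p (\<lambda>(i,j). Z$$(Suc i,j)) \<in> carrier_mat b p" by simp
  show ?thesis using i j
    by (simp add: mult_entry[OF X Z i j] mult_entry[OF X' Z' i j] sum.atLeast0_lessThan_Suc_shift del: sum.atLeast0_lessThan_Suc sum.op_ivl_Suc)
qed

lemma echelon:
  assumes bz: "bezout_domain TYPE('a::idom)"
  shows "(C::'a mat) \<in> carrier_mat m k \<Longrightarrow> \<exists>U r. inv_ex k U \<and> r \<le> m \<and> r \<le> k \<and>
    (\<forall>i<m. \<forall>j<k. r \<le> j \<longrightarrow> (C*U)$$(i,j) = 0) \<and>
    (\<forall>p z. z \<in> carrier_mat k p \<longrightarrow> (\<forall>i<m. \<forall>j<p. (C*U*z)$$(i,j) = 0) \<longrightarrow> (\<forall>i<r. \<forall>j<p. z$$(i,j) = 0))"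
proof (induction m arbitrary: k C)
  case 0
  show ?case by (intro exI[of _ "1\<^sub>m k"] exI[of _ 0]) (auto simp: inv_ex_one)
next
  case (Suc m)
  note C = Suc.prems
  show ?case
  proof (cases "\<forall>j<k. C$$(0,j) = 0")
    case True
    define C' where "C' = mat m k (\<lambda>(i,j). C$$(Suc i,j))"
    have C': "C' \<in> carrier_mat m k" unfolding C'_def by simp
    obtain U r where U: "inv_ex k U" and r: "r \<le> m" and rk: "r \<le> k" and
      zc: "\<forall>i<m. \<forall>j<k. r \<le> j \<longrightarrow> (C'*U)$$(i,j) = 0" and
      inj: "\<forall>p z. z \<in> carrier_mat k p \<longrightarrow> (\<forall>i<m. \<forall>j<p. (C'*U*z)$$(i,j) = 0) \<longrightarrow> (\<forall>i<r. \<forall>j<p. z$$(i,j) = 0)"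
      using Suc.IH[OF C'] by blast
    have Uc: "U \<in> carrier_mat k k" using U unfolding inv_ex_def by auto
    have r0: "(C*Y)$$(0,j) = 0" if "Y \<in> carrier_mat k c" "j < c" for Y c j
      using mult_entry[OF C that(1) _ that(2)] True by simp
    have rS: "(C*Y)$$(Suc i,j) = (C'*Y)$$(i,j)" if "Y \<in> carrier_mat k c" "i < m" "j < c" for Y c i j
      using shift_row[OF C that] unfolding C'_def .
    have 1: "\<forall>i<Suc m. \<forall>j<k. r \<le> j \<longrightarrow> (C*U)$$(i,j) = 0"
    proof (intro allI impI)
      fix i j assume i: "i < Suc m" and j: "j < k" and rj: "r \<le> j"
      show "(C*U)$$(i,j) = 0"
      proof (cases i)
        case 0 thus ?thesis using r0[OF Uc j] by simp
      next
        case (Suc i') thus ?thesis using rS[OF Uc _ j, of i'] zc i j rj by auto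
      qed
    qed
    have 2: "\<forall>i<r. \<forall>j<p. z$$(i,j) = 0" if z: "z \<in> carrier_mat k p"
      and h: "\<forall>i<Suc m. \<forall>j<p. (C*U*z)$$(i,j) = 0" for p z
    proof -
      have Uz: "U*z \<in> carrier_mat k p" using Uc z by auto
      have "\<forall>i<m. \<forall>j<p. (C'*U*z)$$(i,j) = 0"
      proof (intro allI impI)
        fix i j assume i: "i < m" and j: "j < p"
        have "(C'*U*z) = C'*(U*z)" using C' Uc z by auto
        moreover have "C*U*z = C*(U*z)" using C Uc z by auto
        ultimately show "(C'*U*z)$$(i,j) = 0" using rS[OF Uz i j] h i j by auto
      qed
      thus ?thesis using inj z by blast
    qed
    show ?thesis using U r rk 1 2 by (intro exI[of _ U] exI[of _ r]) auto
  next
    case False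
    then obtain j0 where j0: "j0 < k" "C$$(0,j0) \<noteq> 0" by auto
    then obtain k' where k: "k = Suc k'" by (cases k) auto
    obtain V where V: "inv_ex k V" and V0: "\<forall>j. 0 < j \<and> j < k \<longrightarrow> (C*V)$$(0,j) = 0"
      using row_red[OF bz C] by auto
    obtain V' where Vc: "V \<in> carrier_mat k k" and V'c: "V' \<in> carrier_mat k k" and VV': "V*V' = 1\<^sub>m k"
      using V unfolding inv_ex_def by auto
    define C1 where "C1 = C*V"
    have C1: "C1 \<in> carrier_mat (Suc m) k" unfolding C1_def using C Vc by auto
    have g: "C1$$(0,0) \<noteq> 0"
    proof
      assume g0: "C1$$(0,0) = 0"
      have "C1 * V' = C" unfolding C1_def using C Vc V'c VV' by (simp add: assoc_mult_mat[of _ "Suc m" k _ k _ k])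
      hence "C$$(0,j0) = (\<Sum>l\<in>{0..<k}. C1$$(0,l) * V'$$(l,j0))"
        using mult_entry[OF C1 V'c _ j0(1)] by simp
      also have "\<dots> = 0"
      proof (rule sum.neutral, intro ballI)
        fix l assume l: "l \<in> {0..<k}"
        show "C1$$(0,l) * V'$$(l,j0) = 0"
          using g0 V0 l unfolding C1_def by (cases "l = 0") auto
      qed
      finally show False using j0 by simp
    qed
    define C1' where "C1' = mat (Suc m) k' (\<lambda>(i,j). C1$$(i,Suc j))"
    define C'' where "C'' = mat m k' (\<lambda>(i,j). C1'$$(Suc i,j))"
    have C1': "C1' \<in> carrier_mat (Suc m) k'" unfolding C1'_def by simp
    have C'': "C'' \<in> carrier_mat m k'" unfolding C''_def by simp
    obtain U'' r'' where U'': "inv_ex k' U''" and r'': "r'' \<le> m" and rk'': "r'' \<le> k'" and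
      zc: "\<forall>i<m. \<forall>j<k'. r'' \<le> j \<longrightarrow> (C''*U'')$$(i,j) = 0" and
      inj: "\<forall>p z. z \<in> carrier_mat k' p \<longrightarrow> (\<forall>i<m. \<forall>j<p. (C''*U''*z)$$(i,j) = 0) \<longrightarrow> (\<forall>i<r''. \<forall>j<p. z$$(i,j) = 0)"
      using Suc.IH[OF C''] by blast
    have U''c: "U'' \<in> carrier_mat k' k'" using U'' unfolding inv_ex_def by auto
    define Dg where "Dg = four_block_mat (1\<^sub>m 1) (0\<^sub>m 1 k') (0\<^sub>m k' 1) U''"
    have Dg: "inv_ex k Dg" unfolding Dg_def using inv_ex_diag[OF U'', of 1] k by simp
    have Dgc: "Dg \<in> carrier_mat k k" using Dg unfolding inv_ex_def by auto
    have D00: "Dg$$(0,0) = 1" unfolding Dg_def using U''c k by simp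
    have DS0: "Dg$$(Suc l,0) = 0" if "l < k'" for l unfolding Dg_def using U''c that by simp
    have D0S: "Dg$$(0,Suc j) = 0" if "j < k'" for j unfolding Dg_def using U''c that by simp
    have DSS: "Dg$$(Suc l,Suc j) = U''$$(l,j)" if "l < k'" "j < k'" for l j
      unfolding Dg_def using U''c that by simp
    define U where "U = V * Dg"
    have U: "inv_ex k U" unfolding U_def by (rule inv_ex_mult[OF V Dg])
    have Uc: "U \<in> carrier_mat k k" using U unfolding inv_ex_def by auto
    have CU: "C*U = C1*Dg" unfolding U_def C1_def using C Vc Dgc by (simp add: assoc_mult_mat[of _ "Suc m" k _ k _ k])
    have CUc: "C*U \<in> carrier_mat (Suc m) k" using C Uc by auto
    have CU0: "(C*U)$$(i,0) = C1$$(i,0)" if "i < Suc m" for i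
    proof -
      have "(C1*Dg)$$(i,0) = (\<Sum>l\<in>{0..<k}. C1$$(i,l) * Dg$$(l,0))"
        using mult_entry[OF C1 Dgc that] k by simp
      also have "\<dots> = C1$$(i,0) * Dg$$(0,0)"
        by (rule sum_one_point) (use k DS0 in \<open>auto simp: gr0_conv_Suc\<close>)
      finally show ?thesis using CU D00 by simp
    qed
    have CUS: "(C*U)$$(i,Suc j) = (C1'*U'')$$(i,j)" if "i < Suc m" "j < k'" for i j
    proof -
      have "(C1*Dg)$$(i,Suc j) = (\<Sum>l\<in>{0..<Suc k'}. C1$$(i,l) * Dg$$(l,Suc j))"
        using mult_entry[OF C1 Dgc that(1)] k that by simp
      also have "\<dots> = C1$$(i,0) * Dg$$(0,Suc j) + (\<Sum>l\<in>{0..<k'}. C1$$(i,Suc l) * Dg$$(Suc l,Suc j))"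
        by (simp add: sum.atLeast0_lessThan_Suc_shift del: sum.atLeast0_lessThan_Suc sum.op_ivl_Suc)
      also have "\<dots> = (\<Sum>l\<in>{0..<k'}. C1'$$(i,l) * U''$$(l,j))"
        using D0S DSS that by (simp add: C1'_def)
      also have "\<dots> = (C1'*U'')$$(i,j)" using mult_entry[OF C1' U''c that] by simp
      finally show ?thesis using CU by simp
    qed
    have X0: "(C1'*U'')$$(0,j) = 0" if "j < k'" for j
    proof -
      have "(C1'*U'')$$(0,j) = (\<Sum>l\<in>{0..<k'}. C1'$$(0,l) * U''$$(l,j))"
        using mult_entry[OF C1' U''c _ that] by simp
      also have "\<dots> = 0" by (rule sum.neutral) (use V0 k in \<open>auto simp: C1'_def C1_def\<close>)
      finally show ?thesis .
    qed
    have XS: "(C1'*U'')$$(Suc i,j) = (C''*U'')$$(i,j)" if "i < m" "j < k'" for i j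
      using shift_row[OF C1' U''c that] unfolding C''_def .
    have 1: "\<forall>i<Suc m. \<forall>j<k. Suc r'' \<le> j \<longrightarrow> (C*U)$$(i,j) = 0"
    proof (intro allI impI)
      fix i j assume i: "i < Suc m" and j: "j < k" and rj: "Suc r'' \<le> j"
      then obtain j' where j': "j = Suc j'" "j' < k'" "r'' \<le> j'" using k by (cases j) auto
      show "(C*U)$$(i,j) = 0"
      proof (cases i)
        case 0 thus ?thesis using CUS[OF i j'(2)] X0[OF j'(2)] j' by simp
      next
        case (Suc i') thus ?thesis using CUS[OF i j'(2)] XS[of i' j'] zc i j' by auto
      qed
    qed
    have 2: "\<forall>i<Suc r''. \<forall>j<p. z$$(i,j) = 0" if z: "z \<in> carrier_mat k p"
      and h: "\<forall>i<Suc m. \<forall>j<p. (C*U*z)$$(i,j) = 0" for p z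
    proof -
      define z' where "z' = mat k' p (\<lambda>(i,j). z$$(Suc i,j))"
      have zS: "z \<in> carrier_mat (Suc k') p" using z k by simp
      have CUS': "C*U \<in> carrier_mat (Suc m) (Suc k')" using CUc k by simp
      have X'eq: "mat (Suc m) k' (\<lambda>(i,j). (C*U)$$(i,Suc j)) = C1'*U''"
        by (rule eq_matI) (use CUS C1' U''c in auto)
      have fc: "(C*U*z)$$(i,j) = (C*U)$$(i,0)*z$$(0,j) + (C1'*U''*z')$$(i,j)" if "i < Suc m" "j < p" for i j
        using first_col[OF CUS' zS that] unfolding X'eq z'_def .
      have z'c: "z' \<in> carrier_mat k' p" unfolding z'_def by simp
      have zero0: "z$$(0,j) = 0" if "j < p" for j
      proof -
        have "(C1'*U''*z')$$(0,j) = (\<Sum>l\<in>{0..<k'}. (C1'*U'')$$(0,l) * z'$$(l,j))"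
          using mult_entry[of "C1'*U''" "Suc m" k' z' p 0 j] C1' U''c z'c that by simp
        also have "\<dots> = 0" by (rule sum.neutral) (use X0 in auto)
        finally have "(C*U)$$(0,0) * z$$(0,j) = 0" using fc[of 0 j] h that by simp
        thus ?thesis using CU0[of 0] g by simp
      qed
      have "\<forall>i<m. \<forall>j<p. (C''*U''*z')$$(i,j) = 0"
      proof (intro allI impI)
        fix i j assume i: "i < m" and j: "j < p"
        have "(C1'*U''*z')$$(Suc i,j) = (mat m k' (\<lambda>(i,j). (C1'*U'')$$(Suc i,j)) * z')$$(i,j)"
          by (rule shift_row) (use C1' U''c z'c i j in auto)
        also have "mat m k' (\<lambda>(i,j). (C1'*U'')$$(Suc i,j)) = C''*U''"
          by (rule eq_matI) (use XS C'' U''c in auto)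
        finally show "(C''*U''*z')$$(i,j) = 0" using fc[of "Suc i" j] h i j zero0[OF j] by simp
      qed
      hence "\<forall>i<r''. \<forall>j<p. z'$$(i,j) = 0" using inj z'c by blast
      hence zz: "z$$(Suc i,j) = 0" if "i < r''" "j < p" for i j
      proof -
        have "z'$$(i,j) = 0" using that \<open>\<forall>i<r''. \<forall>j<p. z'$$(i,j) = 0\<close> by blast
        thus ?thesis using that rk'' unfolding z'_def by simp
      qed
      show ?thesis
      proof (intro allI impI)
        fix i j assume "i < Suc r''" "j < p"
        thus "z$$(i,j) = 0" using zero0 zz by (cases i) auto
      qed
    qed
    show ?thesis using U r'' rk'' k 1 2 by (intro exI[of _ U] exI[of _ "Suc r''"]) auto
  qed
qed

definition revm :: "nat \<Rightarrow> 'a::comm_ring_1 mat" where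
  "revm k = mat k k (\<lambda>(i,j). if i + j = k - 1 then 1 else 0)"

lemma revm_carrier[simp]: "revm k \<in> carrier_mat k k" unfolding revm_def by simp

lemma mult_revm:
  assumes M: "M \<in> carrier_mat m k" and i: "i < m" and j: "j < k"
  shows "(M * revm k)$$(i,j) = M$$(i, k - 1 - j)"
proof -
  have "(M * revm k)$$(i,j) = (\<Sum>l\<in>{0..<k}. M$$(i,l) * revm k $$ (l,j))"
    by (rule mult_entry[OF M revm_carrier i j])
  also have "\<dots> = M$$(i, k - 1 - j) * revm k $$ (k - 1 - j, j)"
    by (rule sum_one_point) (use j in \<open>auto simp: revm_def\<close>)
  finally show ?thesis using j by (simp add: revm_def)
qed

lemma revm_inv: "inv_ex k (revm k :: 'a::comm_ring_1 mat)"
proof -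
  have "revm k * revm k = (1\<^sub>m k :: 'a mat)"
  proof (rule eq_matI)
    fix i j assume ij: "i < dim_row (1\<^sub>m k :: 'a mat)" "j < dim_col (1\<^sub>m k :: 'a mat)"
    hence "(revm k * revm k :: 'a mat)$$(i,j) = revm k $$ (i, k - 1 - j)"
      using mult_revm[OF revm_carrier, of i k j] by simp
    thus "(revm k * revm k :: 'a mat)$$(i,j) = 1\<^sub>m k $$ (i,j)" using ij by (auto simp: revm_def)
  qed (auto simp: revm_def)
  thus ?thesis unfolding inv_ex_def by (intro conjI bexI[of _ "revm k"]) auto
qed

lemma echelon_rev:
  assumes bz: "bezout_domain TYPE('a::idom)" and N: "(N::'a mat) \<in> carrier_mat m k"
  shows "\<exists>W s. inv_ex k W \<and> s \<le> m \<and> (\<forall>i<m. \<forall>j<k. j + s < k \<longrightarrow> (N*W)$$(i,j) = 0)"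
proof -
  obtain U r where U: "inv_ex k U" and r: "r \<le> m" and zc: "\<forall>i<m. \<forall>j<k. r \<le> j \<longrightarrow> (N*U)$$(i,j) = 0"
    using echelon[OF bz N] by blast
  have Uc: "U \<in> carrier_mat k k" using U unfolding inv_ex_def by auto
  have NU: "N*U \<in> carrier_mat m k" using N Uc by auto
  have eq: "N*(U*revm k) = (N*U)*revm k" using N Uc by (simp add: assoc_mult_mat[of _ m k _ k _ k])
  have "\<forall>i<m. \<forall>j<k. j + r < k \<longrightarrow> (N*(U*revm k))$$(i,j) = 0"
    unfolding eq using mult_revm[OF NU] zc by auto
  thus ?thesis using inv_ex_mult[OF U revm_inv] r by blast
qed

lemma sum_split_shift: "(\<Sum>l\<in>{0..<(r::nat)+q}. f l) = (\<Sum>l\<in>{0..<r}. f l) + (\<Sum>l\<in>{0..<q}. f (l+r) :: 'a::comm_monoid_add)"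
proof (induct q)
  case (Suc q)
  have "(\<Sum>l\<in>{0..<r+Suc q}. f l) = (\<Sum>l\<in>{0..<r+q}. f l) + f (r+q)" by simp
  also have "\<dots> = (\<Sum>l\<in>{0..<r}. f l) + ((\<Sum>l\<in>{0..<q}. f (l+r)) + f (q+r))"
    using Suc by (simp add: add.assoc add.commute[of r q])
  also have "\<dots> = (\<Sum>l\<in>{0..<r}. f l) + (\<Sum>l\<in>{0..<Suc q}. f (l+r))" by simp
  finally show ?case .
qed simp

lemma main_construction:
  assumes bz: "bezout_domain TYPE('a::idom)"
    and A: "(A::'a mat) \<in> carrier_mat n n" and B: "B \<in> carrier_mat n n"
  defines "G \<equiv> four_block_mat A B (0\<^sub>m n n) B"
  shows "\<exists>F r. inv_ex (n+n) F \<and> r \<le> n \<and>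
     (\<forall>i<n. \<forall>j<n+n. n \<le> j \<longrightarrow> (G*F)$$(i,j) = 0) \<and>
     (\<forall>i<n. \<forall>j<n. r \<le> j \<longrightarrow> (G*F)$$(i+n,j) = 0) \<and>
     (\<forall>p z. z \<in> carrier_mat (n+n) p \<longrightarrow> (\<forall>i<n. \<forall>j<p. ((G*F)*z)$$(i,j) = 0) \<longrightarrow> (\<forall>i<r. \<forall>j<p. z$$(i,j) = 0))"
proof -
  let ?k = "n+n"
  have Gc: "G \<in> carrier_mat ?k ?k" unfolding G_def using A B by auto
  define C where "C = mat n ?k (\<lambda>(i,j). G$$(i,j))"
  define C2 where "C2 = mat n ?k (\<lambda>(i,j). G$$(i+n,j))"
  have C: "C \<in> carrier_mat n ?k" unfolding C_def by simp
  have C2: "C2 \<in> carrier_mat n ?k" unfolding C2_def by simp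
  have Gtop: "(G*Y)$$(i,j) = (C*Y)$$(i,j)" if "Y \<in> carrier_mat ?k c" "i < n" "j < c" for Y c i j
    using mult_entry[OF Gc that(1) _ that(3), of i] mult_entry[OF C that] that unfolding C_def by simp
  have Gbot: "(G*Y)$$(i+n,j) = (C2*Y)$$(i,j)" if "Y \<in> carrier_mat ?k c" "i < n" "j < c" for Y c i j
    using mult_entry[OF Gc that(1) _ that(3), of "i+n"] mult_entry[OF C2 that] that unfolding C2_def by simp
  obtain U1 r where U1: "inv_ex ?k U1" and r: "r \<le> n" and
      zc: "\<forall>i<n. \<forall>j<?k. r \<le> j \<longrightarrow> (C*U1)$$(i,j) = 0" and
      inj: "\<forall>p z. z \<in> carrier_mat ?k p \<longrightarrow> (\<forall>i<n. \<forall>j<p. (C*U1*z)$$(i,j) = 0) \<longrightarrow> (\<forall>i<r. \<forall>j<p. z$$(i,j) = 0)"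
    using echelon[OF bz C] by blast
  have U1c: "U1 \<in> carrier_mat ?k ?k" using U1 unfolding inv_ex_def by auto
  let ?q = "?k - r"
  have kq: "?k = r + ?q" using r by simp
  define V where "V = mat ?k ?q (\<lambda>(i,j). U1$$(i,j+r))"
  have Vc: "V \<in> carrier_mat ?k ?q" unfolding V_def by simp
  define N where "N = C2 * V"
  have Nc: "N \<in> carrier_mat n ?q" unfolding N_def using C2 Vc by auto
  obtain W s where W: "inv_ex ?q W" and s: "s \<le> n" and
      zN: "\<forall>i<n. \<forall>j<?q. j + s < ?q \<longrightarrow> (N*W)$$(i,j) = 0"
    using echelon_rev[OF bz Nc] by blast
  have Wc: "W \<in> carrier_mat ?q ?q" using W unfolding inv_ex_def by auto
  define Dg where "Dg = four_block_mat (1\<^sub>m r) (0\<^sub>m r ?q) (0\<^sub>m ?q r) W"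
  have Dg: "inv_ex ?k Dg" using inv_ex_diag[OF W, of r] kq unfolding Dg_def by simp
  have Dgc: "Dg \<in> carrier_mat ?k ?k" using Dg unfolding inv_ex_def by auto
  have DgE: "Dg$$(l,j) = (if l < r then (if j < r then (if l = j then 1 else 0) else 0)
      else (if j < r then 0 else W$$(l-r,j-r)))" if "l < ?k" "j < ?k" for l j
    unfolding Dg_def using that Wc r by (subst index_mat_four_block) auto
  define F where "F = U1 * Dg"
  have F: "inv_ex ?k F" unfolding F_def by (rule inv_ex_mult[OF U1 Dg])
  have Fc: "F \<in> carrier_mat ?k ?k" using F unfolding inv_ex_def by auto
  have CU1c: "C*U1 \<in> carrier_mat n ?k" using C U1c by auto
  have C2U1c: "C2*U1 \<in> carrier_mat n ?k" using C2 U1c by auto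
  have CF: "C*F = C*U1"
  proof (rule eq_matI)
    fix i j assume "i < dim_row (C*U1)" "j < dim_col (C*U1)"
    hence i: "i < n" and j: "j < ?k" using C U1c by auto
    have "(C*F)$$(i,j) = ((C*U1)*Dg)$$(i,j)" unfolding F_def using C U1c Dgc
      by (simp add: assoc_mult_mat[of _ n ?k _ ?k _ ?k])
    also have "\<dots> = (\<Sum>l\<in>{0..<?k}. (C*U1)$$(i,l) * Dg$$(l,j))" by (rule mult_entry[OF CU1c Dgc i j])
    also have "\<dots> = (C*U1)$$(i,j)"
    proof (cases "j < r")
      case True
      have "(\<Sum>l\<in>{0..<?k}. (C*U1)$$(i,l) * Dg$$(l,j)) = (C*U1)$$(i,j) * Dg$$(j,j)"
        by (rule sum_one_point) (use j True i zc in \<open>auto simp: DgE\<close>)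
      thus ?thesis using True j by (simp add: DgE)
    next
      case False
      have "(\<Sum>l\<in>{0..<?k}. (C*U1)$$(i,l) * Dg$$(l,j)) = 0"
        by (rule sum.neutral) (use j False i zc in \<open>auto simp: DgE\<close>)
      thus ?thesis using False zc i j by simp
    qed
    finally show "(C*F)$$(i,j) = (C*U1)$$(i,j)" .
  qed (use C U1c Fc in auto)
  have C2F: "(C2*F)$$(i,j) = 0" if i: "i < n" and j: "j < n" and rj: "r \<le> j" for i j
  proof -
    have jk: "j < ?k" using j by simp
    have "(C2*F)$$(i,j) = ((C2*U1)*Dg)$$(i,j)" unfolding F_def using C2 U1c Dgc
      by (simp add: assoc_mult_mat[of _ n ?k _ ?k _ ?k])
    also have "\<dots> = (\<Sum>l\<in>{0..<r+?q}. (C2*U1)$$(i,l) * Dg$$(l,j))"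
      using mult_entry[OF C2U1c Dgc i jk] kq by simp
    also have "\<dots> = (\<Sum>l\<in>{0..<r}. (C2*U1)$$(i,l) * Dg$$(l,j)) + (\<Sum>l\<in>{0..<?q}. (C2*U1)$$(i,l+r) * Dg$$(l+r,j))"
      by (rule sum_split_shift)
    also have "(\<Sum>l\<in>{0..<r}. (C2*U1)$$(i,l) * Dg$$(l,j)) = 0"
      by (rule sum.neutral) (use rj j r in \<open>auto simp: DgE\<close>)
    also have "(\<Sum>l\<in>{0..<?q}. (C2*U1)$$(i,l+r) * Dg$$(l+r,j)) = (\<Sum>l\<in>{0..<?q}. N$$(i,l) * W$$(l,j-r))"
    proof (rule sum.cong[OF refl])
      fix l assume l: "l \<in> {0..<?q}"
      have "N$$(i,l) = (C2*U1)$$(i,l+r)"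
        unfolding N_def using mult_entry[OF C2 Vc i, of l] mult_entry[OF C2 U1c i, of "l+r"] l
        by (simp add: V_def)
      thus "(C2*U1)$$(i,l+r) * Dg$$(l+r,j) = N$$(i,l) * W$$(l,j-r)"
        using l rj j by (simp add: DgE)
    qed
    also have "\<dots> = (N*W)$$(i,j-r)" using mult_entry[OF Nc Wc i, of "j-r"] j rj by simp
    also have "\<dots> = 0" using zN i j rj s by auto
    finally show ?thesis by simp
  qed
  have GFc: "G*F \<in> carrier_mat ?k ?k" using Gc Fc by auto
  have 1: "\<forall>i<n. \<forall>j<?k. n \<le> j \<longrightarrow> (G*F)$$(i,j) = 0"
  proof (intro allI impI)
    fix i j assume i: "i < n" and j: "j < ?k" and nj: "n \<le> j"
    have "(G*F)$$(i,j) = (C*U1)$$(i,j)" using Gtop[OF Fc i j] CF by simp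
    thus "(G*F)$$(i,j) = 0" using zc i j nj r by simp
  qed
  have 2: "\<forall>i<n. \<forall>j<n. r \<le> j \<longrightarrow> (G*F)$$(i+n,j) = 0"
  proof (intro allI impI)
    fix i j assume i: "i < n" and j: "j < n" and rj: "r \<le> j"
    have "(G*F)$$(i+n,j) = (C2*F)$$(i,j)" using Gbot[OF Fc i] j by simp
    thus "(G*F)$$(i+n,j) = 0" using C2F[OF i j rj] by simp
  qed
  have 3: "\<forall>i<r. \<forall>j<p. z$$(i,j) = 0" if z: "z \<in> carrier_mat ?k p"
    and h: "\<forall>i<n. \<forall>j<p. ((G*F)*z)$$(i,j) = 0" for p z
  proof -
    have "\<forall>i<n. \<forall>j<p. (C*U1*z)$$(i,j) = 0"
    proof (intro allI impI)
      fix i j assume i: "i < n" and j: "j < p"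
      have "((G*F)*z) = G*(F*z)" using Gc Fc z by auto
      moreover have "C*U1*z = C*(F*z)"
      proof -
        have "C*U1*z = C*F*z" using CF by simp
        also have "\<dots> = C*(F*z)" using C Fc z by (simp add: assoc_mult_mat[of _ n ?k _ ?k _ p])
        finally show ?thesis .
      qed
      moreover have "F*z \<in> carrier_mat ?k p" using Fc z by auto
      ultimately show "(C*U1*z)$$(i,j) = 0" using Gtop[of "F*z" p i j] h i j by auto
    qed
    thus ?thesis using inj z by blast
  qed
  show ?thesis by (rule exI[of _ F], rule exI[of _ r]) (use F r 1 2 3 in blast)
qed

theorem theorem1p18:
  fixes A B :: "'a::idom mat" and n :: nat
  assumes "bezout_domain TYPE('a)"
    and "A \<in> carrier_mat n n" and "B \<in> carrier_mat n n"
  shows "\<exists>F D X M. F \<in> carrier_mat (2*n) (2*n) \<and> invertible_mat F \<and>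
     D \<in> carrier_mat n n \<and> X \<in> carrier_mat n n \<and> M \<in> carrier_mat n n \<and>
     four_block_mat A B (0\<^sub>m n n) B * F = four_block_mat D (0\<^sub>m n n) X M \<and>
     left_gcd n A B D \<and> right_lcm n A B M"
proof -
  note bz = assms(1) and A = assms(2) and B = assms(3)
  let ?k = "n+n"
  define G where "G = four_block_mat A B (0\<^sub>m n n) B"
  have Gc: "G \<in> carrier_mat ?k ?k" unfolding G_def using A B by auto
  obtain F r where F: "inv_ex ?k F" and r: "r \<le> n" and
    Z1: "\<forall>i<n. \<forall>j<?k. n \<le> j \<longrightarrow> (G*F)$$(i,j) = 0" and
    Z2: "\<forall>i<n. \<forall>j<n. r \<le> j \<longrightarrow> (G*F)$$(i+n,j) = 0" and
    inj: "\<forall>p z. z \<in> carrier_mat ?k p \<longrightarrow> (\<forall>i<n. \<forall>j<p. ((G*F)*z)$$(i,j) = 0) \<longrightarrow> (\<forall>i<r. \<forall>j<p. z$$(i,j) = 0)"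
    using main_construction[OF bz A B] unfolding G_def by blast
  obtain Fi where Fc: "F \<in> carrier_mat ?k ?k" and Fic: "Fi \<in> carrier_mat ?k ?k"
    and FFi: "F*Fi = 1\<^sub>m ?k" and FiF: "Fi*F = 1\<^sub>m ?k"
    using F unfolding inv_ex_def by blast
  obtain F11 F12 F21 F22 where spF: "split_block F n n = (F11,F12,F21,F22)" by (metis prod_cases4)
  have dF: "dim_row F = n + n" "dim_col F = n + n" using Fc by auto
  note sF = split_block[OF spF dF]
  obtain E11 E12 E21 E22 where spE: "split_block Fi n n = (E11,E12,E21,E22)" by (metis prod_cases4)
  have dE: "dim_row Fi = n + n" "dim_col Fi = n + n" using Fic by auto
  note sE = split_block[OF spE dE]
  define D where "D = A*F11 + B*F21"
  define X where "X = B*F21"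
  define M where "M = B*F22"
  have Dc: "D \<in> carrier_mat n n" unfolding D_def using A B sF by auto
  have Xc: "X \<in> carrier_mat n n" unfolding X_def using A B sF by auto
  have Mc: "M \<in> carrier_mat n n" unfolding M_def using A B sF by auto
  have GF0: "G*F = four_block_mat (A*F11 + B*F21) (A*F12 + B*F22) (0\<^sub>m n n*F11 + B*F21) (0\<^sub>m n n*F12 + B*F22)"
    unfolding G_def by (subst sF(5), rule mult_four_block_mat) (use A B sF in auto)
  have TR: "A*F12 + B*F22 = 0\<^sub>m n n"
  proof (rule eq_matI)
    fix i j assume "i < dim_row (0\<^sub>m n n :: 'a mat)" "j < dim_col (0\<^sub>m n n :: 'a mat)"
    hence i: "i < n" and j: "j < n" by auto
    have "(G*F)$$(i,j+n) = (A*F12 + B*F22)$$(i,j)"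
      unfolding GF0 using A B sF i j by (subst index_mat_four_block) auto
    thus "(A*F12 + B*F22)$$(i,j) = 0\<^sub>m n n $$ (i,j)" using Z1 i j by auto
  qed (use A B sF in auto)
  have GF: "G*F = four_block_mat D (0\<^sub>m n n) X M"
    unfolding GF0 TR D_def X_def M_def using B sF by simp
  have Dent: "D$$(i,j) = (G*F)$$(i,j)" if "i < n" "j < n" for i j
    unfolding GF using that Dc Mc by simp
  have Xent: "X$$(i,j) = (G*F)$$(i+n,j)" if "i < n" "j < n" for i j
    unfolding GF using that Dc Xc Mc by simp
  have "G = (G*F)*Fi" using Gc Fc Fic FFi by (simp add: assoc_mult_mat[of _ ?k ?k _ ?k _ ?k])
  also have "\<dots> = four_block_mat (D*E11 + 0\<^sub>m n n*E21) (D*E12 + 0\<^sub>m n n*E22) (X*E11 + M*E21) (X*E12 + M*E22)"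
    unfolding GF by (subst sE(5), rule mult_four_block_mat) (use Dc Xc Mc sE in auto)
  finally have "four_block_mat A B (0\<^sub>m n n) B = four_block_mat (D*E11 + 0\<^sub>m n n*E21) (D*E12 + 0\<^sub>m n n*E22) (X*E11 + M*E21) (X*E12 + M*E22)"
    unfolding G_def .
  hence conj: "A = D*E11 + 0\<^sub>m n n*E21 \<and> B = D*E12 + 0\<^sub>m n n*E22 \<and> 0\<^sub>m n n = X*E11 + M*E21 \<and> B = X*E12 + M*E22"
  proof (rule four_block_inj[of _ n n _ n _ n, rotated 8])
    show "A \<in> carrier_mat n n" "B \<in> carrier_mat n n" "0\<^sub>m n n \<in> carrier_mat n n" "B \<in> carrier_mat n n"
      using A B by auto
    show "D*E11 + 0\<^sub>m n n*E21 \<in> carrier_mat n n" "D*E12 + 0\<^sub>m n n*E22 \<in> carrier_mat n n"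
      "X*E11 + M*E21 \<in> carrier_mat n n" "X*E12 + M*E22 \<in> carrier_mat n n"
      using Dc Xc Mc sE by (auto intro!: add_carrier_mat mult_carrier_mat)
  qed
  have AB: "A = D*E11 + 0\<^sub>m n n*E21" "B = D*E12 + 0\<^sub>m n n*E22" using conj by blast+
  have AD: "A = D*E11" using AB(1) Dc sE by simp
  have BD: "B = D*E12" using AB(2) Dc sE by simp
  have gcd: "left_gcd n A B D"
    unfolding left_gcd_def left_common_divisor_def left_divisor_mat_def
  proof (intro conjI ballI impI)
    show "D \<in> carrier_mat n n" by (rule Dc)
    show "\<exists>C\<in>carrier_mat n n. A = D * C" using AD sE by blast
    show "\<exists>C\<in>carrier_mat n n. B = D * C" using BD sE by blast
  next
    fix D' :: "'a mat" assume D': "D' \<in> carrier_mat n n"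
      and h: "D' \<in> carrier_mat n n \<and> (\<exists>C\<in>carrier_mat n n. A = D' * C) \<and> (\<exists>C\<in>carrier_mat n n. B = D' * C)"
    then obtain A1 B1 where A1: "A1 \<in> carrier_mat n n" "A = D'*A1" and B1: "B1 \<in> carrier_mat n n" "B = D'*B1" by blast
    have "D = D'*A1*F11 + D'*B1*F21" unfolding D_def using A1 B1 by simp
    also have "\<dots> = D'*(A1*F11) + D'*(B1*F21)" using D' A1 B1 sF by (simp add: assoc_mult_mat[of _ n n _ n _ n])
    also have "\<dots> = D'*(A1*F11 + B1*F21)" using D' A1 B1 sF by (simp add: mult_add_distrib_mat[of _ n n _ n])
    finally show "\<exists>C\<in>carrier_mat n n. D = D' * C" using A1 B1 sF by (intro bexI[of _ "A1*F11 + B1*F21"]) auto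
  qed
  have MA: "M = A*(-F12)"
  proof (rule eq_matI)
    fix i j assume "i < dim_row (A*(-F12))" "j < dim_col (A*(-F12))"
    hence i: "i < n" and j: "j < n" using A sF by auto
    have "(A*F12 + B*F22)$$(i,j) = 0" using TR i j by simp
    hence h: "(A*F12)$$(i,j) + (B*F22)$$(i,j) = 0" using A B sF i j by simp
    have "(A*(-F12))$$(i,j) = - (A*F12)$$(i,j)" using A sF i j by simp
    moreover have "M$$(i,j) = (B*F22)$$(i,j)" unfolding M_def ..
    ultimately show "M$$(i,j) = (A*(-F12))$$(i,j)" using h by (simp add: add_eq_0_iff)
  qed (use A Mc sF in auto)
  have lcm: "right_lcm n A B M"
    unfolding right_lcm_def right_common_multiple_def left_divisor_mat_def
  proof (intro conjI ballI impI)
    show "M \<in> carrier_mat n n" by (rule Mc)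
    show "\<exists>P\<in>carrier_mat n n. \<exists>Q\<in>carrier_mat n n. M = A * P \<and> M = B * Q"
      using MA sF unfolding M_def by (intro bexI[of _ "-F12"] bexI[of _ F22]) auto
  next
    fix M' :: "'a mat" assume M': "M' \<in> carrier_mat n n"
      and h: "M' \<in> carrier_mat n n \<and> (\<exists>P\<in>carrier_mat n n. \<exists>Q\<in>carrier_mat n n. M' = A * P \<and> M' = B * Q)"
    then obtain P Q where P: "P \<in> carrier_mat n n" and Q: "Q \<in> carrier_mat n n" and MP: "M' = A*P" and MQ: "M' = B*Q"
      by blast
    define w where "w = four_block_mat P (0\<^sub>m n n) (-Q) (0\<^sub>m n n)"
    have wc: "w \<in> carrier_mat ?k ?k" unfolding w_def using P Q by auto
    define z where "z = Fi * w"
    have zc: "z \<in> carrier_mat ?k ?k" unfolding z_def using Fic wc by auto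
    obtain Z11 Z12 Z21 Z22 where spZ: "split_block z n n = (Z11,Z12,Z21,Z22)" by (metis prod_cases4)
    have dZ: "dim_row z = n + n" "dim_col z = n + n" using zc by auto
    note sZ = split_block[OF spZ dZ]
    have "(G*F)*z = G*((F*Fi)*w)" unfolding z_def using Gc Fc Fic wc by (simp add: assoc_mult_mat[of _ ?k ?k _ ?k _ ?k])
    also have "\<dots> = G*w" using FFi wc by simp
    also have "\<dots> = four_block_mat (A*P + B*(-Q)) (A*0\<^sub>m n n + B*0\<^sub>m n n) (0\<^sub>m n n*P + B*(-Q)) (0\<^sub>m n n*0\<^sub>m n n + B*0\<^sub>m n n)"
      unfolding G_def w_def by (rule mult_four_block_mat) (use A B P Q in auto)
    finally have e1: "(G*F)*z = \<dots>" .
    have e2: "(G*F)*z = four_block_mat (D*Z11 + 0\<^sub>m n n*Z21) (D*Z12 + 0\<^sub>m n n*Z22) (X*Z11 + M*Z21) (X*Z12 + M*Z22)"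
      unfolding GF by (subst sZ(5), rule mult_four_block_mat) (use Dc Xc Mc sZ in auto)
    have conj2: "D*Z11 + 0\<^sub>m n n*Z21 = A*P + B*(-Q) \<and> D*Z12 + 0\<^sub>m n n*Z22 = A*0\<^sub>m n n + B*0\<^sub>m n n \<and>
      X*Z11 + M*Z21 = 0\<^sub>m n n*P + B*(-Q) \<and> X*Z12 + M*Z22 = 0\<^sub>m n n*0\<^sub>m n n + B*0\<^sub>m n n"
    proof (rule four_block_inj[of _ n n _ n _ n, rotated 8, OF e2[symmetric, unfolded e1]])
      show "D*Z11 + 0\<^sub>m n n*Z21 \<in> carrier_mat n n" "D*Z12 + 0\<^sub>m n n*Z22 \<in> carrier_mat n n"
        "X*Z11 + M*Z21 \<in> carrier_mat n n" "X*Z12 + M*Z22 \<in> carrier_mat n n"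
        using Dc Xc Mc sZ by (auto intro!: add_carrier_mat mult_carrier_mat)
      show "A*P + B*(-Q) \<in> carrier_mat n n" "A*0\<^sub>m n n + B*0\<^sub>m n n \<in> carrier_mat n n"
        "0\<^sub>m n n*P + B*(-Q) \<in> carrier_mat n n" "0\<^sub>m n n*0\<^sub>m n n + B*0\<^sub>m n n \<in> carrier_mat n n"
        using A B P Q by (auto intro!: add_carrier_mat mult_carrier_mat)
    qed
    have eqs: "D*Z11 + 0\<^sub>m n n*Z21 = A*P + B*(-Q)" "X*Z11 + M*Z21 = 0\<^sub>m n n*P + B*(-Q)"
      using conj2 by blast+
    have APBQ: "A*P + B*(-Q) = 0\<^sub>m n n"
    proof -
      have "B*(-Q) = - M'" using MQ B Q by (simp add: uminus_mult_right_mat)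
      hence e: "A*P + B*(-Q) = A*P + - (A*P)" using MP by simp
      have AP: "A*P \<in> carrier_mat n n" using A P by auto
      have "A*P + - (A*P) = 0\<^sub>m n n"
      proof (rule eq_matI)
        fix i j assume ij: "i < dim_row (0\<^sub>m n n :: 'a mat)" "j < dim_col (0\<^sub>m n n :: 'a mat)"
        have d: "dim_row (A*P) = n" "dim_col (A*P) = n" using AP by auto
        have "(A*P + - (A*P))$$(i,j) = (A*P)$$(i,j) + (- (A*P))$$(i,j)"
          by (rule index_add_mat(1)) (use ij d in simp_all)
        also have "(- (A*P))$$(i,j) = - ((A*P)$$(i,j))" by (rule index_uminus_mat(1)) (use ij d in simp_all)
        finally show "(A*P + - (A*P))$$(i,j) = 0\<^sub>m n n $$ (i,j)" using ij by simp
      qed (use AP in auto)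
      thus ?thesis using e by simp
    qed
    have DZ: "D*Z11 = 0\<^sub>m n n" using eqs(1) APBQ Dc sZ by simp
    have Z11r: "Z11$$(i,j) = 0" if "i < r" "j < n" for i j
    proof -
      define zz where "zz = mat ?k n (\<lambda>(i,j). if i < n then Z11$$(i,j) else 0)"
      have zzc: "zz \<in> carrier_mat ?k n" unfolding zz_def by simp
      have "\<forall>i<n. \<forall>j<n. ((G*F)*zz)$$(i,j) = 0"
      proof (intro allI impI)
        fix i j assume i: "i < n" and j: "j < n"
        have GFc: "G*F \<in> carrier_mat ?k ?k" using Gc Fc by auto
        have "((G*F)*zz)$$(i,j) = (\<Sum>l\<in>{0..<n+n}. (G*F)$$(i,l) * zz$$(l,j))"
          by (rule mult_entry[OF GFc zzc _ j]) (use i in simp)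
        also have "\<dots> = (\<Sum>l\<in>{0..<n}. (G*F)$$(i,l) * zz$$(l,j)) + (\<Sum>l\<in>{0..<n}. (G*F)$$(i,l+n) * zz$$(l+n,j))"
          by (rule sum_split_shift)
        also have "(\<Sum>l\<in>{0..<n}. (G*F)$$(i,l+n) * zz$$(l+n,j)) = 0"
          by (rule sum.neutral) (use j in \<open>auto simp: zz_def\<close>)
        also have "(\<Sum>l\<in>{0..<n}. (G*F)$$(i,l) * zz$$(l,j)) = (\<Sum>l\<in>{0..<n}. D$$(i,l) * Z11$$(l,j))"
          by (rule sum.cong[OF refl]) (use i j Dent in \<open>auto simp: zz_def\<close>)
        also have "\<dots> = (D*Z11)$$(i,j)" using mult_entry[OF Dc _ i j, of Z11] sZ by simp
        finally show "((G*F)*zz)$$(i,j) = 0" using DZ i j by simp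
      qed
      hence "\<forall>i<r. \<forall>j<n. zz$$(i,j) = 0" using inj zzc by blast
      thus ?thesis using that r unfolding zz_def by auto
    qed
    have XZ: "X*Z11 = 0\<^sub>m n n"
    proof (rule eq_matI)
      fix i j assume "i < dim_row (0\<^sub>m n n :: 'a mat)" "j < dim_col (0\<^sub>m n n :: 'a mat)"
      hence i: "i < n" and j: "j < n" by auto
      have "(X*Z11)$$(i,j) = (\<Sum>l\<in>{0..<n}. X$$(i,l) * Z11$$(l,j))" using mult_entry[OF Xc _ i j, of Z11] sZ by simp
      also have "\<dots> = 0"
      proof (rule sum.neutral, intro ballI)
        fix l assume l: "l \<in> {0..<n}"
        show "X$$(i,l) * Z11$$(l,j) = 0"
        proof (cases "l < r")
          case True thus ?thesis using Z11r j by simp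
        next
          case False thus ?thesis using Xent[of i l] Z2 i l by simp
        qed
      qed
      finally show "(X*Z11)$$(i,j) = 0\<^sub>m n n $$ (i,j)" using i j by simp
    qed (use Xc sZ in auto)
    have l1: "X*Z11 + M*Z21 = M*Z21" using XZ Mc sZ by simp
    have l2: "0\<^sub>m n n*P + B*(-Q) = B*(-Q)" using P B Q by simp
    have MZ: "M*Z21 = B*(-Q)" using eqs(2) l1 l2 by simp
    have "M' = M*(-Z21)" using MZ MQ Mc sZ B Q by simp
    thus "\<exists>C\<in>carrier_mat n n. M' = M * C" using sZ by (intro bexI[of _ "-Z21"]) auto
  qed
  have F2: "F \<in> carrier_mat (2*n) (2*n)" using Fc by (simp add: mult_2)
  have GF': "four_block_mat A B (0\<^sub>m n n) B * F = four_block_mat D (0\<^sub>m n n) X M" using GF unfolding G_def .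
  show ?thesis
    by (rule exI[of _ F], rule exI[of _ D], rule exI[of _ X], rule exI[of _ M])
      (intro conjI F2 inv_ex_invertible[OF F] Dc Xc Mc GF' gcd lcm)
qed

end
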